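(* For every $n\ge1$, letting $k_n=\lceil\log_2 n\rceil$, $$c_n=2^{k_n-1}\,\mathsf{T}\!\left(\frac{n}{2^{k_n-1}}-1\right),$$ where $\mathsf{T}:[0,1]\to\mathbb{R}$ is the Takagi (Blancmange) function $\mathsf{T}(x)=\sum_{i=0}^{\infty}2^{-i}s(2^i x)$ and $s(x)=\min_{z\in\mathbb{Z}}|x-z|$.
   Context: Bifurcating trees: rooted trees in which every internal node has exactly two children; $\mathcal{T}_n$ is the set of isomorphism classes of bifurcating trees with $n$ leaves. For a node $w$, $\kappa_T(w)$ is its number of descendant leaves. The Colless index is $\mathcal{C}(T)=\sum_{v}|\kappa_T(v_1)-\kappa_T(v_2)|$, summed over internal nodes $v$ with children $v_1,v_2$; $c_n=\min\{\mathcal{C}(T):T\in\mathcal{T}_n\}$. (For $n=1$, $k_n=0$ and the argument of $\mathsf{T}$ is $1$.) *)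

theory Defs
  imports Complex_Main
begin

text \<open>Rooted bifurcating trees (unlabelled); isomorphism classes are handled by
  taking the minimum over all trees, since the Colless index is invariant
  under swapping children.\<close>
datatype btree = Leaf | Node btree btree

fun leaves :: "btree \<Rightarrow> nat" where
  "leaves Leaf = 1"
| "leaves (Node l r) = leaves l + leaves r"

fun colless :: "btree \<Rightarrow> nat" where
  "colless Leaf = 0"
| "colless (Node l r) =
     nat \<bar>int (leaves l) - int (leaves r)\<bar> + colless l + colless r"

definition min_colless :: "nat \<Rightarrow> nat" where
  "min_colless n = Min {colless t | t. leaves t = n}"

definition dist_int :: "real \<Rightarrow> real" where
  "dist_int x = (INF z::int. \<bar>x - of_int z\<bar>)"

definition takagi :: "real \<Rightarrow> real" where
  "takagi x = (\<Sum>i. dist_int (2 ^ i * x) / 2 ^ i)"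

end

theory Submission
  imports Defs
begin

definition dd :: "nat \<Rightarrow> nat \<Rightarrow> nat" where
  "dd j n = min (n mod 2^j) (2^j - n mod 2^j)"

definition SS :: "nat \<Rightarrow> nat" where
  "SS n = (\<Sum>j<n. if 2^j < n then dd j n else 0)"

lemma SS_ext:
  assumes "n \<le> N" shows "SS n = (\<Sum>j<N. if 2^j < n then dd j n else 0)"
proof -
  have "(\<Sum>j<N. if 2^j < n then dd j n else 0) = (\<Sum>j<n. if 2^j < n then dd j n else 0)"
  proof (rule sum.mono_neutral_right)
    show "\<forall>i\<in>{..<N} - {..<n}. (if 2^i < n then dd i n else 0) = 0"
    proof
      fix i assume "i \<in> {..<N} - {..<n}"
      hence "n \<le> i" by auto
      also have "i < 2^i" by (rule less_exp)
      finally show "(if 2^i < n then dd i n else 0) = 0" by simp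
    qed
  qed (use assms in auto)
  thus ?thesis by (simp add: SS_def)
qed

lemma dd0[simp]: "dd 0 n = 0" by (simp add: dd_def)

lemma dd_self: "dd j (2^j) = 0" by (simp add: dd_def)

lemma min2: "min (2*r) (2*M - 2*(r::nat)) = 2 * min r (M - r)"
  by (auto simp: min_def)

lemma arith_odd:
  fixes r M :: nat
  assumes "r < M" "M = 2 * M'"
  shows "min (2*r+1) (2*M - (2*r+1)) =
     min r (M - r) + (if Suc r = M then 0 else min (Suc r) (M - Suc r))"
proof (cases "Suc r = M")
  case True
  hence r: "r = 2*M' - 1" "M' \<ge> 1" using assms by auto
  hence "2*M' \<ge> 2" by simp
  show ?thesis
  proof (cases "M' = 1")
    case True
    then show ?thesis using r assms by simp
  next
    case False
    hence m2: "M' \<ge> 2" using r by simp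
    have e1: "M - r = 1" "2*M - (2*r+1) = 1" "r \<ge> 1" using r m2 assms by linarith+
    have "min (2*r+1) (2*M - (2*r+1)) = 1" using e1 by simp
    moreover have "min r (M - r) = 1" using e1 by simp
    ultimately show ?thesis using True by simp
  qed
next
  case False
  hence s: "Suc r < M" using assms by simp
  show ?thesis
  proof (cases "2*r+1 \<le> M")
    case True
    hence t: "2*r + 2 \<le> M" using assms by presburger
    have "min (2*r+1) (2*M - (2*r+1)) = 2*r+1" using t by (intro min_absorb1) linarith
    moreover have "min r (M - r) = r" using t by (intro min_absorb1) linarith
    moreover have "min (Suc r) (M - Suc r) = Suc r" using t by (intro min_absorb1) linarith
    ultimately show ?thesis using False by simp
  next
    case f2: False
    have "min (2*r+1) (2*M - (2*r+1)) = 2*M - (2*r+1)" using f2 by (intro min_absorb2) linarith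
    moreover have "min r (M - r) = M - r" using f2 by (intro min_absorb2) linarith
    moreover have "min (Suc r) (M - Suc r) = M - Suc r" using f2 by (intro min_absorb2) linarith
    ultimately show ?thesis using False s by simp
  qed
qed

lemma dd_even: "dd (Suc j) (2*m) = 2 * dd j m"
proof -
  have "(2*m) mod 2^(Suc j) = 2 * (m mod 2^j)"
    by (simp add: mod_mult_mult1)
  thus ?thesis unfolding dd_def using min2[of "m mod 2^j" "2^j"] by simp
qed

lemma dd_odd: "dd (Suc j) (2*m+1) = dd j m + dd j (m+1) + (if j = 0 then 1 else 0)"
proof (cases j)
  case 0
  then show ?thesis by (simp add: dd_def)
next
  case (Suc i)
  obtain M where M_def: "M = (2::nat)^j" by blast
  have Me: "M = 2 * 2^i" using Suc M_def by simp
  obtain r where r_def: "r = m mod M" by blast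
  have rM: "r < M" using Me r_def by simp
  have a: "(2*m+1) mod 2^(Suc j) = 2*r+1"
    using mod_mult2_eq[of "2*m+1" 2 M] by (simp add: M_def r_def)
  have b: "(m+1) mod M = (if Suc r = M then 0 else Suc r)"
    using mod_Suc[of m M] by (simp add: r_def)
  have "dd (Suc j) (2*m+1) = min (2*r+1) (2*M - (2*r+1))"
    using a by (simp add: dd_def M_def)
  moreover have "dd j m = min r (M - r)" by (simp add: dd_def r_def M_def)
  moreover have "dd j (m+1) = (if Suc r = M then 0 else min (Suc r) (M - Suc r))"
    using b by (simp add: dd_def M_def)
  ultimately show ?thesis using arith_odd[OF rM Me] Suc by simp
qed

lemma SS0[simp]: "SS 0 = 0" by (simp add: SS_def)
lemma SS1[simp]: "SS 1 = 0" by (simp add: SS_def)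
lemma SS1'[simp]: "SS (Suc 0) = 0" by (simp add: SS_def)

lemma SS_double: "SS (2*m) = 2 * SS m"
proof -
  have "SS (2*m) = (\<Sum>j<Suc (2*m). if 2^j < 2*m then dd j (2*m) else 0)"
    by (rule SS_ext) simp
  also have "\<dots> = (\<Sum>j<2*m. if 2^Suc j < 2*m then dd (Suc j) (2*m) else 0)"
    by (subst sum.lessThan_Suc_shift) simp
  also have "\<dots> = (\<Sum>j<2*m. 2 * (if 2^j < m then dd j m else 0))"
    by (rule sum.cong) (auto simp: dd_even)
  also have "\<dots> = 2 * SS m"
    by (simp add: sum_distrib_left[symmetric] SS_ext[of m "2*m"])
  finally show ?thesis .
qed

lemma SS_odd: assumes "m \<ge> 1" shows "SS (2*m+1) = SS m + SS (m+1) + 1"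
proof -
  have "SS (2*m+1) = (\<Sum>j<Suc (2*m+1). if 2^j < 2*m+1 then dd j (2*m+1) else 0)"
    by (rule SS_ext) simp
  also have "\<dots> = (\<Sum>j<2*m+1. if 2^Suc j < 2*m+1 then dd (Suc j) (2*m+1) else 0)"
    by (subst sum.lessThan_Suc_shift) simp
  also have "\<dots> = (\<Sum>j<2*m+1. (if 2^j < m then dd j m else 0)
       + (if 2^j < m+1 then dd j (m+1) else 0) + (if j = 0 then 1 else 0))"
  proof (rule sum.cong)
    fix j assume "j \<in> {..<2*m+1}"
    have e: "2^Suc j < 2*m+1 \<longleftrightarrow> 2^j < m+1" by auto
    show "(if 2^Suc j < 2*m+1 then dd (Suc j) (2*m+1) else 0) =
      (if 2^j < m then dd j m else 0) + (if 2^j < m+1 then dd j (m+1) else 0) + (if j = 0 then 1 else 0)"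
    proof (cases "2^j < m+1")
      case True
      show ?thesis
      proof (cases "2^j = m")
        case True2: True
        then show ?thesis using True e dd_self[of j] dd_odd[of j m] by auto
      next
        case False
        then show ?thesis using True e dd_odd[of j m] by auto
      qed
    next
      case False
      have "j \<noteq> 0" using False assms by (cases j) auto
      then show ?thesis using e False by auto
    qed
  qed simp
  also have "\<dots> = (\<Sum>j<2*m+1. (if 2^j < m then dd j m else 0))
       + (\<Sum>j<2*m+1. (if 2^j < m+1 then dd j (m+1) else 0)) + (\<Sum>j<2*m+1. (if j = 0 then 1 else 0))"
    by (simp only: sum.distrib)
  also have "\<dots> = SS m + SS (m+1) + 1"
    using SS_ext[of m "2*m+1"] SS_ext[of "m+1" "2*m+1"] by simp
  finally show ?thesis .
qed

definition Q :: "nat \<Rightarrow> nat \<Rightarrow> bool" where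
  "Q a b \<longleftrightarrow> int (SS (a+b)) \<le> int (SS a) + int (SS b) + \<bar>int a - int b\<bar>"

lemma eo_step:
  assumes IH: "\<And>x y. x + y < 2*u + (2*v+1) \<Longrightarrow> Q x y" and u: "u \<ge> 1"
  shows "Q (2*u) (2*v+1)"
proof (cases "v = 0")
  case True
  have h: "int (SS (u+1)) \<le> int (SS u) + int u - 1"
    using IH[of u 1] u by (simp add: Q_def)
  have "SS (2*u+1) = SS u + SS (u+1) + 1" using SS_odd u by simp
  moreover have "SS (2*u) = 2 * SS u" by (rule SS_double)
  ultimately show ?thesis using h True u by (simp add: Q_def)
next
  case False
  have h1: "int (SS (u+v+1)) \<le> int (SS u) + int (SS (v+1)) + \<bar>int u - int v - 1\<bar>"
    using IH[of u "v+1"] u by (simp add: Q_def algebra_simps)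
  have h2: "int (SS (u+v)) \<le> int (SS u) + int (SS v) + \<bar>int u - int v\<bar>"
    using IH[of u v] u by (simp add: Q_def)
  have e1: "SS (2*u + (2*v+1)) = SS (u+v) + SS (u+v+1) + 1"
    using SS_odd[of "u+v"] u by (simp add: algebra_simps)
  have e2: "SS (2*v+1) = SS v + SS (v+1) + 1" using SS_odd[of v] False by simp
  have e3: "SS (2*u) = 2 * SS u" by (rule SS_double)
  show ?thesis unfolding Q_def using h1 h2 e1 e2 e3 by simp
qed

lemma Q_comm: "Q a b \<longleftrightarrow> Q b a"
  by (simp add: Q_def add.commute abs_minus_commute)

lemma SS_sub: "Q a b"
proof (induction "a+b" arbitrary: a b rule: less_induct)
  case less
  have IH: "\<And>x y. x + y < a + b \<Longrightarrow> Q x y" using less by blast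
  show ?case
  proof (cases "a = 0 \<or> b = 0")
    case True
    then show ?thesis by (auto simp: Q_def)
  next
    case False
    hence a1: "a \<ge> 1" and b1: "b \<ge> 1" by auto
    show ?thesis
    proof (cases "even a")
      case ea: True
      then obtain x where x: "a = 2*x" by (auto elim: evenE)
      show ?thesis
      proof (cases "even b")
        case True
        then obtain y where y: "b = 2*y" by (auto elim: evenE)
        have "Q x y" using IH[of x y] x y a1 b1 by simp
        moreover have "SS (2*x + 2*y) = 2 * SS (x+y)" using SS_double[of "x+y"] by (simp add: algebra_simps)
        ultimately show ?thesis using x y SS_double[of x] SS_double[of y] by (simp add: Q_def)
      next
        case False
        then obtain y where y: "b = 2*y+1" by (auto elim: oddE)
        show ?thesis using eo_step[of x y] IH x y a1 by simp
      qed
    next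
      case oa: False
      then obtain x where x: "a = 2*x+1" by (auto elim: oddE)
      show ?thesis
      proof (cases "even b")
        case True
        then obtain y where y: "b = 2*y" by (auto elim: evenE)
        have "Q b a" using eo_step[of y x] IH x y b1 by (simp add: add.commute)
        thus ?thesis by (simp add: Q_comm)
      next
        case False
        then obtain y where y: "b = 2*y+1" by (auto elim: oddE)
        have s: "SS (a+b) = 2 * SS (x+y+1)" using SS_double[of "x+y+1"] x y by (simp add: algebra_simps)
        show ?thesis
        proof (cases "x = 0")
          case x0: True
          show ?thesis
          proof (cases "y = 0")
            case True
            then show ?thesis using s x0 x y by (simp add: Q_def)
          next
            case False
            have h: "int (SS (y+1)) \<le> int (SS y) + int y - 1"
              using IH[of y 1] False x y by (simp add: Q_def)
            have "SS b = SS y + SS (y+1) + 1" using SS_odd[of y] False y by simp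
            then show ?thesis using s h x0 x y by (simp add: Q_def)
          qed
        next
          case xn: False
          show ?thesis
          proof (cases "y = 0")
            case True
            have h: "int (SS (x+1)) \<le> int (SS x) + int x - 1"
              using IH[of x 1] xn x y by (simp add: Q_def)
            have "SS a = SS x + SS (x+1) + 1" using SS_odd[of x] xn x by simp
            then show ?thesis using s h True x y by (simp add: Q_def)
          next
            case False
            have h1: "int (SS (x+y+1)) \<le> int (SS (x+1)) + int (SS y) + \<bar>int x + 1 - int y\<bar>"
              using IH[of "x+1" y] x y by (simp add: Q_def algebra_simps)
            have h2: "int (SS (x+y+1)) \<le> int (SS x) + int (SS (y+1)) + \<bar>int x - int y - 1\<bar>"
              using IH[of x "y+1"] x y by (simp add: Q_def algebra_simps)
            have "SS a = SS x + SS (x+1) + 1" using SS_odd[of x] xn x by simp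
            moreover have "SS b = SS y + SS (y+1) + 1" using SS_odd[of y] False y by simp
            ultimately show ?thesis using s h1 h2 x y by (simp add: Q_def)
          qed
        qed
      qed
    qed
  qed
qed


lemma leaves_pos: "leaves t \<ge> 1"
  by (induction t) auto

lemma colless_bound: "colless t \<le> leaves t ^ 2"
proof (induction t)
  case Leaf then show ?case by simp
next
  case (Node l r)
  define a where "a = leaves l"
  define b where "b = leaves r"
  have a1: "a \<ge> 1" "b \<ge> 1" using leaves_pos a_def b_def by auto
  have "a \<le> a * b" "b \<le> a * b" using a1 by auto
  hence "nat \<bar>int a - int b\<bar> \<le> 2 * a * b" by arith
  moreover have "(a+b)^2 = a^2 + 2*a*b + b^2" by (simp add: power2_sum)
  ultimately show ?case using Node a_def b_def by simp
qed

lemma lower: "SS (leaves t) \<le> colless t"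
proof (induction t)
  case Leaf then show ?case by simp
next
  case (Node l r)
  have "Q (leaves l) (leaves r)" by (rule SS_sub)
  then show ?case using Node unfolding Q_def by simp
qed

lemma upper: "n \<ge> 1 \<Longrightarrow> \<exists>t. leaves t = n \<and> colless t = SS n"
proof (induction n rule: less_induct)
  case (less n)
  show ?case
  proof (cases "n = 1")
    case True
    then show ?thesis by (intro exI[of _ Leaf]) simp
  next
    case False
    show ?thesis
    proof (cases "even n")
      case True
      then obtain m where m: "n = 2*m" by (auto elim: evenE)
      have "m \<ge> 1" "m < n" using m less.prems False by auto
      then obtain t where t: "leaves t = m" "colless t = SS m" using less.IH by blast
      show ?thesis using t m SS_double[of m] by (intro exI[of _ "Node t t"]) simp
    next
      case False
      then obtain m where m: "n = 2*m+1" by (auto elim: oddE)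
      have "m \<ge> 1" "m < n" "m+1 < n" using m less.prems \<open>n \<noteq> 1\<close> by auto
      then obtain t1 t2 where t: "leaves t1 = m+1" "colless t1 = SS (m+1)"
        "leaves t2 = m" "colless t2 = SS m" using less.IH by (metis le_add2)
      show ?thesis using t m SS_odd[of m] \<open>m \<ge> 1\<close> by (intro exI[of _ "Node t1 t2"]) simp
    qed
  qed
qed

lemma min_colless_SS: assumes "n \<ge> 1" shows "min_colless n = SS n"
  unfolding min_colless_def
proof (rule Min_eqI)
  show "finite {colless t |t. leaves t = n}"
    by (rule finite_subset[of _ "{..n^2}"]) (use colless_bound in auto)
  show "\<And>y. y \<in> {colless t |t. leaves t = n} \<Longrightarrow> SS n \<le> y" using lower by auto
  obtain t where t: "leaves t = n" "colless t = SS n" using upper[OF assms] by blast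
  hence "SS n = colless t \<and> leaves t = n" by simp
  thus "SS n \<in> {colless t |t. leaves t = n}" by blast
qed

lemma dist_int_frac: "dist_int x = min (frac x) (1 - frac x)"
  unfolding dist_int_def
proof (rule antisym)
  have bdd: "bdd_below (range (\<lambda>z::int. \<bar>x - of_int z\<bar>))" by (rule bdd_belowI[of _ 0]) auto
  have "(INF z::int. \<bar>x - of_int z\<bar>) \<le> \<bar>x - of_int \<lfloor>x\<rfloor>\<bar>" by (rule cINF_lower[OF bdd]) auto
  moreover have "(INF z::int. \<bar>x - of_int z\<bar>) \<le> \<bar>x - of_int (\<lfloor>x\<rfloor> + 1)\<bar>" by (rule cINF_lower[OF bdd]) auto
  ultimately show "(INF z::int. \<bar>x - of_int z\<bar>) \<le> min (frac x) (1 - frac x)"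
    by (simp add: frac_def)
next
  show "min (frac x) (1 - frac x) \<le> (INF z::int. \<bar>x - of_int z\<bar>)"
  proof (rule cINF_greatest)
    fix z :: int
    have "z \<le> \<lfloor>x\<rfloor> \<or> z \<ge> \<lfloor>x\<rfloor> + 1" by linarith
    moreover have "of_int \<lfloor>x\<rfloor> \<le> x" "x < of_int \<lfloor>x\<rfloor> + 1" by linarith+
    ultimately show "min (frac x) (1 - frac x) \<le> \<bar>x - of_int z\<bar>"
      unfolding frac_def by (smt (verit) of_int_le_iff of_int_add of_int_1)
  qed simp
qed

lemma frac_dyadic: "frac (real q / 2^j) = real (q mod 2^j) / 2^j"
proof -
  have f: "\<lfloor>real q / 2^j\<rfloor> = int (q div 2^j)"
    using floor_divide_of_nat_eq[of q "2^j"] by simp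
  have h: "q = 2^j * (q div 2^j) + q mod 2^j" by simp
  have "real q = 2^j * real (q div 2^j) + real (q mod 2^j)"
    using arg_cong[OF h, of real] unfolding of_nat_add of_nat_mult of_nat_power by simp
  hence "real q / 2^j = real (q div 2^j) + real (q mod 2^j) / 2^j"
    by (simp add: field_simps)
  thus ?thesis unfolding frac_def f by simp
qed

lemma dist_dyadic: "dist_int (real q / 2^j) = real (dd j q) / 2^j"
proof -
  have lt: "q mod 2^j < 2^j" by simp
  have "real (dd j q) = min (real (q mod 2^j)) (2^j - real (q mod 2^j))"
    using lt unfolding dd_def of_nat_min by (simp add: of_nat_diff)
  have mm: "min (a / c) (b / c) = min a b / c" if "c > 0" for a b c :: real
  proof (cases "a \<le> b")
    case True
    then show ?thesis using that by (simp add: min_def divide_right_mono)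
  next
    case False
    then show ?thesis using that by (simp add: min_def divide_le_cancel)
  qed
  have e: "1 - real (q mod 2^j) / 2^j = (2^j - real (q mod 2^j)) / 2^j"
    by (simp add: diff_divide_distrib)
  have e2: "min (real (q mod 2^j) / 2^j) ((2^j - real (q mod 2^j)) / 2^j)
     = min (real (q mod 2^j)) (2^j - real (q mod 2^j)) / 2^j" by (rule mm) simp
  show ?thesis unfolding dist_int_frac frac_dyadic e e2
    using \<open>real (dd j q) = _\<close> by simp
qed

lemma dist_int_nat: "dist_int (real z) = 0"
proof -
  have fz: "frac (real z) = 0" using frac_of_int[of "int z"] by simp
  show ?thesis unfolding dist_int_frac fz by simp
qed

lemma takagi_dyadic: "2^p * takagi (real q / 2^p) = real (\<Sum>j<p. dd (Suc j) q)"
proof -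
  define f where "f i = dist_int (2^i * (real q / 2^p)) / 2^i" for i :: nat
  have z: "f i = 0" if "i \<notin> {..<p}" for i
  proof -
    have "i \<ge> p" using that by simp
    hence "(2::real)^i = 2^p * 2^(i-p)" by (simp add: power_add[symmetric])
    hence "2^i * (real q / 2^p) = real (q * 2^(i-p))" by simp
    thus ?thesis unfolding f_def using dist_int_nat[of "q * 2^(i-p)"] by simp
  qed
  have nz: "f i = real (dd (p - i) q) / 2^p" if "i < p" for i
  proof -
    have e: "(2::real)^p = 2^i * 2^(p-i)" using that by (simp add: power_add[symmetric])
    hence "2^i * (real q / 2^p) = real q / 2^(p-i)" by simp
    hence "f i = real (dd (p-i) q) / 2^(p-i) / 2^i" unfolding f_def by (simp add: dist_dyadic)
    thus ?thesis using e by (simp add: field_simps)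
  qed
  have "takagi (real q / 2^p) = (\<Sum>i<p. f i)"
    unfolding takagi_def f_def[symmetric] by (rule suminf_finite) (use z in auto)
  also have "\<dots> = (\<Sum>i<p. real (dd (p - i) q) / 2^p)" by (rule sum.cong) (auto simp: nz)
  finally have "2^p * takagi (real q / 2^p) = (\<Sum>i<p. real (dd (p - i) q))"
    by (simp add: sum_divide_distrib[symmetric])
  also have "\<dots> = (\<Sum>i<p. real (dd (Suc (p - Suc i)) q))"
    by (rule sum.cong) (auto simp: Suc_diff_Suc)
  also have "\<dots> = (\<Sum>j<p. real (dd (Suc j) q))"
    by (rule sum.nat_diff_reindex[where g = "\<lambda>j. real (dd (Suc j) q)"])
  finally show ?thesis by simp
qed


lemma SS_eq_sum:
  assumes lo: "2^p < n" and hi: "n \<le> 2^(Suc p)"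
  shows "SS n = (\<Sum>j<p. dd (Suc j) n)"
proof -
  have set: "{j \<in> {..<n}. 2^j < n} = {..<Suc p}"
  proof (intro set_eqI iffI)
    fix j assume "j \<in> {j \<in> {..<n}. 2^j < n}"
    hence "2^j < (2::nat)^Suc p" using hi by auto
    thus "j \<in> {..<Suc p}" using power_less_imp_less_exp[of "2::nat" j "Suc p"] by simp
  next
    fix j assume "j \<in> {..<Suc p}"
    hence "(2::nat)^j \<le> 2^p" by (simp add: power_increasing)
    hence "2^j < n" using lo by linarith
    moreover have "j < n" using less_exp[of j] \<open>2^j < n\<close> by linarith
    ultimately show "j \<in> {j \<in> {..<n}. 2^j < n}" by simp
  qed
  have "SS n = sum (\<lambda>j. dd j n) {j \<in> {..<n}. 2^j < n}"
    unfolding SS_def using sum.inter_filter[of "{..<n}" "\<lambda>j. dd j n" "\<lambda>j. 2^j < n"] by simp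
  also have "\<dots> = (\<Sum>j<Suc p. dd j n)" unfolding set ..
  also have "\<dots> = (\<Sum>j<p. dd (Suc j) n)" using sum.lessThan_Suc_shift[of "\<lambda>j. dd j n" p] by simp
  finally show ?thesis .
qed

lemma dd_shift:
  assumes "j \<le> p" shows "dd j (q + 2^p) = dd j q"
proof -
  have "(2::nat)^p = 2^j * 2^(p-j)" using assms by (simp add: power_add[symmetric])
  thus ?thesis unfolding dd_def by simp
qed

theorem corollary4:
  fixes n :: nat
  assumes "n \<ge> 1"
  defines "k \<equiv> \<lceil>log 2 (real n)\<rceil>"
  shows "real (min_colless n) =
           2 powr (real_of_int k - 1) * takagi (real n / 2 powr (real_of_int k - 1) - 1)"
proof (cases "n = 1")
  case True
  hence k0: "k = 0" unfolding k_def by simp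
  have "takagi 1 = 0" using takagi_dyadic[of 0 1] by simp
  moreover have "real n / 2 powr (real_of_int k - 1) - 1 = 1" using True k0 by (simp add: powr_minus)
  ultimately show ?thesis using True min_colless_SS[of 1] by simp
next
  case False
  hence n2: "n \<ge> 2" using assms by simp
  have lpos: "log 2 (real n) > 0" using n2 by simp
  have c: "real_of_int k - 1 < log 2 (real n)" "log 2 (real n) \<le> real_of_int k"
    unfolding k_def using ceiling_correct by auto
  hence k1: "k \<ge> 1" using lpos by linarith
  define p where "p = nat k - 1"
  have kp: "real_of_int k - 1 = real p" "real_of_int k = real (Suc p)" using k1 p_def by auto
  have "2 powr (real p) < real n" using c kp less_log_iff[of 2 "real n"] n2 by auto
  hence lo: "2^p < n" by (simp add: powr_realpow)
  have "real n \<le> 2 powr (real (Suc p))" using c kp log_le_iff[of 2 "real n"] n2 by auto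
  hence hi: "n \<le> 2^(Suc p)" using powr_realpow[of 2 "Suc p"]
    by (metis of_nat_le_iff of_nat_numeral of_nat_power zero_less_numeral)
  define q where "q = n - 2^p"
  have nq: "n = q + 2^p" using lo q_def by simp
  have pw: "2 powr (real_of_int k - 1) = 2^p" using kp by (simp add: powr_realpow)
  have arg: "real n / 2 powr (real_of_int k - 1) - 1 = real q / 2^p"
    using pw nq by (simp add: field_simps)
  have "SS n = (\<Sum>j<p. dd (Suc j) q)"
    unfolding SS_eq_sum[OF lo hi] by (rule sum.cong) (auto simp: nq dd_shift)
  thus ?thesis unfolding arg unfolding pw takagi_dyadic using min_colless_SS[OF \<open>n \<ge> 1\<close>] by simp
qed

end
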